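(* Let $X$ be a reflexive Banach space over $\mathbb{K}\in\{\mathbb{R},\mathbb{C}\}$, let $W\subset\mathcal{B}$ be a non-empty compact set, and let $\mathcal{U}\subset\mathcal{W}(X)$ be a non-empty convex set. Let $[T]\in\mathcal{W}(X)$, $[L]\in\mathcal{U}$ and $r>0$. Then $[L]$ is a strongly unique best approximation to $[T]$ in $\mathcal{U}$ with constant $r$, i.e. $$\|[T]-[U]\|_W\ge\|[T]-[L]\|_W+r\|[U]-[L]\|_W\quad\text{for all }[U]\in\mathcal{U},$$ if and only if for every $[U]\in\mathcal{U}$ there exists $(x^*,x)\in W_{T-L}$ such that $$\operatorname{re}\big(x^*((U-L)x)\big)\le -r\,\|[U]-[L]\|_W.$$
   Context: $\mathcal{K}(X)$ denotes the space of compact linear operators $X\to X$. $\mathcal{B}=B_{X^*}\times B_X$ carries the product of the weak$^*$ topology on $B_{X^*}$ and the weak topology on $B_X$. For a fixed non-empty compact $W\subset\mathcal{B}$ and $L\in\mathcal{K}(X)$ put $\|L\|_W=\sup\{|x^*(Lx)|:(x^*,x)\in W\}$. $\mathcal{W}(X)$ is the quotient of $\mathcal{K}(X)$ by $L\sim T\iff\|L-T\|_W=0$, normed by $\|[L]\|_W=\|L\|_W$. In the complex case $Z=\bigcup_{\theta\in[0,2\pi]}\{(e^{i\theta}x^*,x):(x^*,x)\in W\}$; in the real case $Z=W\cup\{(-x^*,x):(x^*,x)\in W\}$. For $[S]\in\mathcal{W}(X)$, $W_S=\{(x^*,x)\in Z: x^*(Sx)=\|[S]\|_W\}$. The values $x^*(Sx)$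 for $(x^*,x)\in Z$ do not depend on the chosen representatives. $\operatorname{re}$ denotes the real part. *)

theory Defs
  imports "HOL-Analysis.Analysis"
begin

text \<open>A normed space over a scalar field K (K = real or K = complex), given as a real
  normed space together with a K-scalar multiplication extending the real one.\<close>
definition K_space :: "('k::real_normed_field \<Rightarrow> 'a::real_normed_vector \<Rightarrow> 'a) \<Rightarrow> bool" where
  "K_space sm \<longleftrightarrow>
     (\<forall>t x. sm (of_real t) x = scaleR t x) \<and>
     (\<forall>a b x. sm (a * b) x = sm a (sm b x)) \<and>
     (\<forall>a b x. sm (a + b) x = sm a x + sm b x) \<and>
     (\<forall>a x y. sm a (x + y) = sm a x + sm a y) \<and>
     (\<forall>a x. norm (sm a x) = norm a * norm x)"

definition K_linear :: "('k::real_normed_field \<Rightarrow> 'a::real_normed_vector \<Rightarrow> 'a) \<Rightarrow> ('a \<Rightarrow> 'k) \<Rightarrow> bool" where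
  "K_linear sm f \<longleftrightarrow> (\<forall>x y. f (x + y) = f x + f y) \<and> (\<forall>c x. f (sm c x) = c * f x)"

definition K_dual :: "('k::real_normed_field \<Rightarrow> 'a::real_normed_vector \<Rightarrow> 'a) \<Rightarrow> ('a \<Rightarrow> 'k) set" where
  "K_dual sm = {f. K_linear sm f \<and> (\<exists>B. \<forall>x. norm (f x) \<le> B * norm x)}"

definition dual_ball :: "('k::real_normed_field \<Rightarrow> 'a::real_normed_vector \<Rightarrow> 'a) \<Rightarrow> ('a \<Rightarrow> 'k) set" where
  "dual_ball sm = {f \<in> K_dual sm. \<forall>x. norm (f x) \<le> norm x}"

definition unit_ball :: "'a::real_normed_vector set" where
  "unit_ball = {x. norm x \<le> 1}"

definition K_reflexive :: "('k::real_normed_field \<Rightarrow> 'a::real_normed_vector \<Rightarrow> 'a) \<Rightarrow> bool" where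
  "K_reflexive sm \<longleftrightarrow>
     (\<forall>\<Phi> :: ('a \<Rightarrow> 'k) \<Rightarrow> 'k.
        (\<forall>f\<in>K_dual sm. \<forall>g\<in>K_dual sm. \<Phi> (\<lambda>x. f x + g x) = \<Phi> f + \<Phi> g) \<and>
        (\<forall>f\<in>K_dual sm. \<forall>c. \<Phi> (\<lambda>x. c * f x) = c * \<Phi> f) \<and>
        (\<exists>B. \<forall>f\<in>K_dual sm. norm (\<Phi> f) \<le> B * onorm f)
        \<longrightarrow> (\<exists>x. \<forall>f\<in>K_dual sm. \<Phi> f = f x))"

definition weak_star_ball_top :: "('k::real_normed_field \<Rightarrow> 'a::real_normed_vector \<Rightarrow> 'a) \<Rightarrow> ('a \<Rightarrow> 'k) topology" where
  "weak_star_ball_top sm =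
     topology_generated_by {{f \<in> dual_ball sm. f y \<in> V} | y V. open V}"

definition weak_ball_top :: "('k::real_normed_field \<Rightarrow> 'a::real_normed_vector \<Rightarrow> 'a) \<Rightarrow> 'a topology" where
  "weak_ball_top sm =
     topology_generated_by {{x \<in> unit_ball. g x \<in> V} | g V. g \<in> K_dual sm \<and> open V}"

definition B_top :: "('k::real_normed_field \<Rightarrow> 'a::real_normed_vector \<Rightarrow> 'a) \<Rightarrow> (('a \<Rightarrow> 'k) \<times> 'a) topology" where
  "B_top sm = prod_topology (weak_star_ball_top sm) (weak_ball_top sm)"

definition compact_op :: "('k::real_normed_field \<Rightarrow> 'a::real_normed_vector \<Rightarrow> 'a) \<Rightarrow> ('a \<Rightarrow> 'a) \<Rightarrow> bool" where
  "compact_op sm L \<longleftrightarrow>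
     (\<forall>x y. L (x + y) = L x + L y) \<and> (\<forall>c x. L (sm c x) = sm c (L x)) \<and>
     compact (closure (L ` unit_ball))"

definition normW :: "(('a \<Rightarrow> 'k::real_normed_field) \<times> 'a) set \<Rightarrow> ('a \<Rightarrow> 'a) \<Rightarrow> real" where
  "normW W L = Sup ((\<lambda>(f, x). norm (f (L x))) ` W)"

text \<open>The set Z: rotations of W by unimodular scalars (c = \<plusminus>1 if K = real,
  c = e^{i\<theta>} if K = complex).\<close>
definition Zset :: "(('a \<Rightarrow> 'k::real_normed_field) \<times> 'a) set \<Rightarrow> (('a \<Rightarrow> 'k) \<times> 'a) set" where
  "Zset W = {((\<lambda>y. c * f y), x) | c f x. (f, x) \<in> W \<and> norm c = 1}"

definition WS :: "(('a \<Rightarrow> 'k::real_normed_field) \<times> 'a) set \<Rightarrow> ('a \<Rightarrow> 'a) \<Rightarrow> (('a \<Rightarrow> 'k) \<times> 'a) set" where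
  "WS W S = {(f, x) \<in> Zset W. f (S x) = of_real (normW W S)}"

text \<open>The standing hypotheses of the theorem (all classes in \<W>(X) are handled through
  representatives in \<K>(X)).\<close>
definition thm_setting ::
  "('k::real_normed_field \<Rightarrow> 'a::banach \<Rightarrow> 'a) \<Rightarrow> (('a \<Rightarrow> 'k) \<times> 'a) set \<Rightarrow> ('a \<Rightarrow> 'a) set
    \<Rightarrow> ('a \<Rightarrow> 'a) \<Rightarrow> ('a \<Rightarrow> 'a) \<Rightarrow> real \<Rightarrow> bool" where
  "thm_setting sm W \<U> T L r \<longleftrightarrow>
     K_space sm \<and> K_reflexive sm \<and>
     W \<noteq> {} \<and> W \<subseteq> dual_ball sm \<times> unit_ball \<and> compactin (B_top sm) W \<and>
     \<U> \<noteq> {} \<and> (\<forall>U\<in>\<U>. compact_op sm U) \<and>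
     (\<forall>A\<in>\<U>. \<forall>B\<in>\<U>. \<forall>t::real. 0 \<le> t \<and> t \<le> 1 \<longrightarrow>
        (\<lambda>x. scaleR t (A x) + scaleR (1 - t) (B x)) \<in> \<U>) \<and>
     compact_op sm T \<and> L \<in> \<U> \<and> r > 0"

end

theory Submission imports Defs begin

lemma cm_eps:
  assumes "\<And>p e. p \<in> topspace X \<Longrightarrow> e > 0 \<Longrightarrow> \<exists>U. openin X U \<and> p \<in> U \<and> (\<forall>q\<in>U. dist (f q) (f p) < e)"
  shows "continuous_map X euclidean f"
  using assms unfolding Met_TC.continuous_map_to_metric[simplified]
  by (simp add: dist_commute)

lemma top_ws: "topspace (weak_star_ball_top sm) = dual_ball sm"
  unfolding weak_star_ball_top_def topology_generated_by_topspace
  by auto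

lemma zero_dual: "(\<lambda>x. 0) \<in> K_dual sm"
  unfolding K_dual_def K_linear_def by (auto intro: exI[of _ 0])

lemma top_wb: "topspace (weak_ball_top sm) = unit_ball"
  unfolding weak_ball_top_def topology_generated_by_topspace
  using zero_dual by blast

lemma top_B: "topspace (B_top sm) = dual_ball sm \<times> unit_ball"
  by (simp add: B_top_def top_ws top_wb)


definition good_op :: "('k::real_normed_field \<Rightarrow> 'a::real_normed_vector \<Rightarrow> 'a) \<Rightarrow> ('a \<Rightarrow> 'a) \<Rightarrow> bool" where
  "good_op sm A \<longleftrightarrow> (\<forall>x y. A (x + y) = A x + A y) \<and> (\<forall>c x. A (sm c x) = sm c (A x)) \<and>
     (\<exists>C. compact C \<and> A ` unit_ball \<subseteq> C)"

lemma compact_good: "compact_op sm A \<Longrightarrow> good_op sm A"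
proof -
  assume a: "compact_op sm A"
  have "A ` unit_ball \<subseteq> closure (A ` unit_ball)" by (rule closure_subset)
  with a show ?thesis unfolding compact_op_def good_op_def by (metis (no_types, lifting))
qed

lemma add_diff:
  fixes f :: "'a::ab_group_add \<Rightarrow> 'b::ab_group_add"
  assumes "\<And>x y. f (x + y) = f x + f y"
  shows "f (x - y) = f x - f y"
proof -
  have "f (x - y) + f y = f x" using assms[of "x - y" y] by simp
  then show ?thesis by (simp add: eq_diff_eq)
qed

lemma add_zero:
  fixes f :: "'a::ab_group_add \<Rightarrow> 'b::ab_group_add"
  assumes "\<And>x y. f (x + y) = f x + f y"
  shows "f 0 = 0"
  using assms[of 0 0] by simp

lemma sm_diff: "K_space sm \<Longrightarrow> sm c (a - b) = sm c a - sm c b"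
  unfolding K_space_def using add_diff[of "sm c" a b] by blast

lemma good_diff:
  assumes "K_space sm" "good_op sm A" "good_op sm B"
  shows "good_op sm (\<lambda>x. A x - B x)"
proof -
  obtain C1 C2 where C: "compact C1" "A ` unit_ball \<subseteq> C1" "compact C2" "B ` unit_ball \<subseteq> C2"
    using assms unfolding good_op_def by metis
  have "(\<lambda>x. A x - B x) ` unit_ball \<subseteq> {x - y | x y. x \<in> C1 \<and> y \<in> C2}" using C by blast
  moreover have "A (x + y) - B (x + y) = A x - B x + (A y - B y)" for x y
    using assms(2,3) unfolding good_op_def by simp
  moreover have "A (sm c x) - B (sm c x) = sm c (A x - B x)" for c x
    using assms(2,3) sm_diff[OF assms(1)] unfolding good_op_def by simp
  ultimately show ?thesis using compact_differences[OF C(1,3)]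
    unfolding good_op_def by blast
qed

lemma good_scale:
  assumes "K_space sm" "good_op sm A"
  shows "A (scaleR t x) = scaleR t (A x)"
proof -
  have "A (sm (of_real t) x) = sm (of_real t) (A x)" using assms(2) unfolding good_op_def by blast
  moreover have "\<And>y. sm (of_real t) y = scaleR t y" using assms(1) unfolding K_space_def by blast
  ultimately show ?thesis by simp
qed

lemma good_bounded:
  assumes "K_space sm" "good_op sm A"
  shows "\<exists>M. \<forall>x. norm (A x) \<le> M * norm x"
proof -
  obtain C where C: "compact C" "A ` unit_ball \<subseteq> C" using assms unfolding good_op_def by metis
  then obtain M where M: "\<And>y. y \<in> C \<Longrightarrow> norm y \<le> M"
    using compact_imp_bounded[OF C(1)] unfolding bounded_iff by blast
  have "norm (A x) \<le> M * norm x" for x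
  proof (cases "x = 0")
    case True
    then show ?thesis using add_zero[of A] assms unfolding good_op_def by simp
  next
    case False
    let ?u = "scaleR (1 / norm x) x"
    have "?u \<in> unit_ball" unfolding unit_ball_def using False by simp
    then have "norm (A ?u) \<le> M" using C M by blast
    moreover have "A x = scaleR (norm x) (A ?u)"
      using good_scale[OF assms, of "1 / norm x" x] False by simp
    ultimately show ?thesis using False
      by (simp add: mult.commute mult_left_mono)
  qed
  then show ?thesis by blast
qed

lemma dual_add: "g \<in> K_dual sm \<Longrightarrow> g (x + y) = g x + g y"
  unfolding K_dual_def K_linear_def by auto

lemma dual_diff: "g \<in> K_dual sm \<Longrightarrow> g (x - y) = g x - g y"
  using add_diff[of g] dual_add by metis

lemma dual_ball_le: "g \<in> dual_ball sm \<Longrightarrow> norm (g x) \<le> norm x"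
  unfolding dual_ball_def by auto

lemma dual_ball_dual: "g \<in> dual_ball sm \<Longrightarrow> g \<in> K_dual sm"
  unfolding dual_ball_def by auto

lemma dual_scale: assumes "K_space sm" "g \<in> K_dual sm" shows "g (scaleR t x) = of_real t * g x"
proof -
  have "g (sm (of_real t) x) = of_real t * g x" using assms unfolding K_dual_def K_linear_def by blast
  moreover have "\<And>y. sm (of_real t) y = scaleR t y" using assms(1) unfolding K_space_def by blast
  ultimately show ?thesis by simp
qed

lemma comp_dual:
  assumes "K_space sm" "good_op sm A" "g \<in> dual_ball sm"
  shows "(\<lambda>x. g (A x)) \<in> K_dual sm"
proof -
  obtain M where M: "\<And>x. norm (A x) \<le> M * norm x" using good_bounded[OF assms(1,2)] by blast
  have "norm (g (A x)) \<le> M * norm x" for x using M[of x] dual_ball_le[OF assms(3)] order_trans by blast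
  moreover have "K_linear sm (\<lambda>x. g (A x))"
    using assms(2) dual_ball_dual[OF assms(3)] unfolding good_op_def K_dual_def K_linear_def by simp
  ultimately show ?thesis unfolding K_dual_def by blast
qed


lemma phi_cont:
  assumes ks: "K_space sm" and gA: "good_op sm A"
  shows "continuous_map (B_top sm) euclidean (\<lambda>p. fst p (A (snd p)))"
proof (rule cm_eps)
  fix p and e :: real
  assume p: "p \<in> topspace (B_top sm)" and e: "e > 0"
  obtain g x where pgx: "p = (g, x)" by (cases p)
  have g: "g \<in> dual_ball sm" and x: "x \<in> unit_ball" using p top_B pgx by auto
  obtain C where C: "compact C" "A ` unit_ball \<subseteq> C" using gA unfolding good_op_def by metis
  obtain Y where Y: "finite Y" "C \<subseteq> (\<Union>y\<in>Y. ball y (e/5))"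
    using C(1) e unfolding compact_eq_totally_bounded by (meson divide_pos_pos zero_less_numeral)
  define U1 where "U1 = (\<Inter>y\<in>Y. {g'\<in>dual_ball sm. g' y \<in> ball (g y) (e/5)}) \<inter> topspace (weak_star_ball_top sm)"
  have o1: "openin (weak_star_ball_top sm) U1" unfolding U1_def
  proof (rule openin_INT[OF Y(1)])
    fix y assume "y \<in> Y"
    show "openin (weak_star_ball_top sm) {g' \<in> dual_ball sm. g' y \<in> ball (g y) (e / 5)}"
      unfolding weak_star_ball_top_def
      by (rule topology_generated_by_Basis, rule CollectI, rule exI[of _ y], rule exI[of _ "ball (g y) (e/5)"]) simp
  qed
  define U2 where "U2 = {x'\<in>unit_ball. (\<lambda>z. g (A z)) x' \<in> ball (g (A x)) (e/5)}"
  have gAd: "(\<lambda>z. g (A z)) \<in> K_dual sm" using comp_dual[OF ks gA g] .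
  have o2: "openin (weak_ball_top sm) U2" unfolding U2_def weak_ball_top_def
    by (rule topology_generated_by_Basis, rule CollectI, rule exI[of _ "\<lambda>z. g (A z)"],
        rule exI[of _ "ball (g (A x)) (e/5)"]) (simp add: gAd)
  have o: "openin (B_top sm) (U1 \<times> U2)" unfolding B_top_def by (simp add: openin_prod_Times_iff o1 o2)
  have pin: "p \<in> U1 \<times> U2" using g x e unfolding pgx U1_def U2_def top_ws by auto
  have "dist (fst q (A (snd q))) (fst p (A (snd p))) < e" if q: "q \<in> U1 \<times> U2" for q
  proof -
    obtain g' x' where qgx: "q = (g', x')" by (cases q)
    have g': "g' \<in> dual_ball sm" and x': "x' \<in> unit_ball" using q unfolding qgx U1_def U2_def top_ws by auto
    have "A x' \<in> C" using C x' by blast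
    then obtain y where y: "y \<in> Y" "dist y (A x') < e/5" using Y by auto
    have h1: "dist (g y) (g' y) < e/5" using q y(1) unfolding qgx U1_def by auto
    have h2: "dist (g (A x)) (g (A x')) < e/5" using q unfolding qgx U2_def by auto
    have d': "g' \<in> K_dual sm" and d: "g \<in> K_dual sm" using g g' dual_ball_dual by auto
    have eq: "g' (A x') - g (A x) = g' (A x' - y) + (g' y - g y) + g (y - A x') + (g (A x') - g (A x))"
      using dual_diff[OF d'] dual_diff[OF d] by simp
    have "norm (g' (A x') - g (A x)) \<le> norm (g' (A x' - y)) + norm (g' y - g y) + norm (g (y - A x')) + norm (g (A x') - g (A x))"
      unfolding eq by (meson norm_triangle_le add_mono order_refl)
    moreover have "norm (g' (A x' - y)) \<le> norm (A x' - y)" using dual_ball_le[OF g'] .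
    moreover have "norm (g (y - A x')) \<le> norm (y - A x')" using dual_ball_le[OF g] .
    moreover have "norm (A x' - y) < e/5" "norm (y - A x') < e/5" using y(2) by (auto simp: dist_norm norm_minus_commute)
    moreover have "norm (g' y - g y) < e/5" "norm (g (A x') - g (A x)) < e/5"
      using h1 h2 by (auto simp: dist_norm norm_minus_commute)
    ultimately have "norm (g' (A x') - g (A x)) < e" using e by linarith
    then show ?thesis unfolding qgx pgx by (simp add: dist_norm)
  qed
  then show "\<exists>U. openin (B_top sm) U \<and> p \<in> U \<and> (\<forall>q\<in>U. dist (fst q (A (snd q))) (fst p (A (snd p))) < e)"
    using o pin by blast
qed


lemma attain:
  assumes "compactin X K" "K \<noteq> {}" "continuous_map X euclideanreal F"
  shows "\<exists>p\<in>K. \<forall>q\<in>K. F q \<le> F p"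
proof -
  have "compact (F ` K)" using image_compactin[OF assms(1,3)] by simp
  then obtain y where "y \<in> F ` K" "\<forall>z\<in>F ` K. z \<le> y"
    using compact_attains_sup assms(2) by (metis image_is_empty)
  then show ?thesis by blast
qed

lemma normW_upper:
  assumes ks: "K_space sm" and gA: "good_op sm A" and W: "W \<subseteq> dual_ball sm \<times> unit_ball"
    and gx: "(g, x) \<in> W"
  shows "norm (g (A x)) \<le> normW W A"
proof -
  obtain C where C: "compact C" "A ` unit_ball \<subseteq> C" using gA unfolding good_op_def by metis
  then obtain M where M: "\<And>y. y \<in> C \<Longrightarrow> norm y \<le> M"
    using compact_imp_bounded[OF C(1)] unfolding bounded_iff by blast
  have "norm (g' (A x')) \<le> M" if "(g', x') \<in> W" for g' x'
  proof -
    have "g' \<in> dual_ball sm" "x' \<in> unit_ball" using that W by auto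
    then show ?thesis using dual_ball_le M C by (meson image_subset_iff order_trans)
  qed
  then have "bdd_above ((\<lambda>(f, x). norm (f (A x))) ` W)" by (intro bdd_aboveI[of _ M]) fastforce
  then show ?thesis unfolding normW_def using gx by (intro cSup_upper) (auto intro: image_eqI[of _ _ "(g, x)"])
qed

lemma normW_attain:
  assumes ks: "K_space sm" and gA: "good_op sm A" and W: "W \<subseteq> dual_ball sm \<times> unit_ball"
    and Wc: "compactin (B_top sm) W" and Wne: "W \<noteq> {}"
  shows "\<exists>(g, x) \<in> W. norm (g (A x)) = normW W A"
proof -
  have "continuous_map (B_top sm) euclideanreal (norm \<circ> (\<lambda>p. fst p (A (snd p))))"
    by (rule continuous_map_compose[OF phi_cont[OF ks gA]]) (simp add: continuous_on_norm_id)
  from attain[OF Wc Wne this] obtain p where p: "p \<in> W" "\<forall>q\<in>W. norm (fst q (A (snd q))) \<le> norm (fst p (A (snd p)))"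
    by auto
  obtain g x where pg: "p = (g, x)" by (cases p)
  have "normW W A \<le> norm (g (A x))" unfolding normW_def using Wne p pg
    by (intro cSup_least) auto
  then show ?thesis using normW_upper[OF ks gA W] p pg by fastforce
qed


lemma main_generic:
  fixes sm :: "'k::real_normed_field \<Rightarrow> 'a::banach \<Rightarrow> 'a" and re :: "'k \<Rightarrow> real"
  assumes re_add: "\<And>a b. re (a + b) = re a + re b"
    and re_scale: "\<And>t z. re (of_real t * z) = t * re z"
    and re_of_real: "\<And>t. re (of_real t) = t"
    and re_le: "\<And>z. re z \<le> norm z"
    and re_eq: "\<And>z. norm z \<le> re z \<Longrightarrow> z = of_real (norm z)"
    and re_cont: "continuous_on UNIV re"
    and circ: "compact (sphere (0::'k) 1)"
    and set: "thm_setting sm W \<U> T L r"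
  shows "(\<forall>U\<in>\<U>. normW W (\<lambda>x. T x - U x) \<ge> normW W (\<lambda>x. T x - L x) + r * normW W (\<lambda>x. U x - L x))
     \<longleftrightarrow> (\<forall>U\<in>\<U>. \<exists>(f, x) \<in> WS W (\<lambda>x. T x - L x). re (f (U x - L x)) \<le> - r * normW W (\<lambda>x. U x - L x))"
proof -
  from set have ks: "K_space sm" and Wne: "W \<noteq> {}" and Wsub: "W \<subseteq> dual_ball sm \<times> unit_ball"
    and Wc: "compactin (B_top sm) W" and Uops: "\<And>U. U \<in> \<U> \<Longrightarrow> compact_op sm U"
    and conv: "\<And>A B t. A \<in> \<U> \<Longrightarrow> B \<in> \<U> \<Longrightarrow> 0 \<le> t \<Longrightarrow> t \<le> 1 \<Longrightarrow> (\<lambda>x. t *\<^sub>R A x + (1 - t) *\<^sub>R B x) \<in> \<U>"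
    and Tc: "compact_op sm T" and L: "L \<in> \<U>" and r: "r > 0"
    unfolding thm_setting_def by auto
  have re_diff: "re (a - b) = re a - re b" for a b using add_diff[of re a b] re_add by blast
  have re_ge: "- norm z \<le> re z" for z using re_diff[of 0 z] re_diff[of 0 0] re_le[of "-z"] by simp
  have gT: "good_op sm T" using compact_good Tc by blast
  have gU: "good_op sm U" if "U \<in> \<U>" for U using compact_good Uops that by blast
  have gL: "good_op sm L" using gU L by blast
  define N where "N = normW W (\<lambda>x. T x - L x)"
  have gS: "good_op sm (\<lambda>x. T x - L x)" using good_diff[OF ks gT gL] .
  have gdual: "g \<in> K_dual sm" "g \<in> dual_ball sm" if "(g, x) \<in> W" for g x
    using that Wsub dual_ball_dual by auto
  show ?thesis
  proof
    assume H: "\<forall>U\<in>\<U>. normW W (\<lambda>x. T x - U x) \<ge> normW W (\<lambda>x. T x - L x) + r * normW W (\<lambda>x. U x - L x)"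
    show "\<forall>U\<in>\<U>. \<exists>(f, x) \<in> WS W (\<lambda>x. T x - L x). re (f (U x - L x)) \<le> - r * normW W (\<lambda>x. U x - L x)"
    proof
      fix U assume U: "U \<in> \<U>"
      define d where "d = normW W (\<lambda>x. U x - L x)"
      have gD: "good_op sm (\<lambda>x. U x - L x)" using good_diff[OF ks gU[OF U] gL] .
      obtain g0 x0 where g0: "(g0, x0) \<in> W" "norm (g0 (U x0 - L x0)) = d"
        using normW_attain[OF ks gD Wsub Wc Wne] unfolding d_def by auto
      have d0: "d \<ge> 0" using g0(2) norm_ge_zero by metis
      have key: "\<exists>c g x. norm c = 1 \<and> (g, x) \<in> W \<and> re (c * g (U x - L x)) \<le> - r * d
                   \<and> re (c * g (T x - L x)) \<ge> N - t * d" if t: "0 < t" "t \<le> 1" for t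
      proof -
        define Ut where "Ut = (\<lambda>x. t *\<^sub>R U x + (1 - t) *\<^sub>R L x)"
        have Ut: "Ut \<in> \<U>" using conv[OF U L] t unfolding Ut_def by simp
        have gE: "good_op sm (\<lambda>x. T x - Ut x)" using good_diff[OF ks gT gU[OF Ut]] .
        have gUL: "good_op sm (\<lambda>x. Ut x - L x)" using good_diff[OF ks gU[OF Ut] gL] .
        have HUt: "normW W (\<lambda>x. T x - Ut x) \<ge> N + r * normW W (\<lambda>x. Ut x - L x)"
          using H Ut unfolding N_def by blast
        have "norm (g0 (Ut x0 - L x0)) \<le> normW W (\<lambda>x. Ut x - L x)"
          using normW_upper[OF ks gUL Wsub g0(1)] by simp
        moreover have "Ut x0 - L x0 = t *\<^sub>R (U x0 - L x0)" unfolding Ut_def by (simp add: algebra_simps)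
        moreover have "g0 (t *\<^sub>R (U x0 - L x0)) = of_real t * g0 (U x0 - L x0)"
          using dual_scale[OF ks gdual(1)[OF g0(1)]] .
        ultimately have dt: "t * d \<le> normW W (\<lambda>x. Ut x - L x)" using g0(2) t by (simp add: norm_mult)
        obtain g x where gx: "(g, x) \<in> W" "norm (g (T x - Ut x)) = normW W (\<lambda>x. T x - Ut x)"
          using normW_attain[OF ks gE Wsub Wc Wne] by auto
        note gd = gdual[OF gx(1)]
        define a where "a = g (T x - L x)"
        define b where "b = g (U x - L x)"
        have eqT: "T x - Ut x = (T x - L x) - t *\<^sub>R (U x - L x)" unfolding Ut_def by (simp add: algebra_simps)
        have "g (T x - Ut x) = g (T x - L x) - g (t *\<^sub>R (U x - L x))"
          by (simp only: eqT dual_diff[OF gd(1)])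
        then have zab: "g (T x - Ut x) = a - of_real t * b" unfolding a_def b_def
          using dual_scale[OF ks gd(1)] by simp
        define z where "z = a - of_real t * b"
        have "r * (t * d) \<le> r * normW W (\<lambda>x. Ut x - L x)" using dt r by simp
        then have zge: "norm z \<ge> N + r * t * d" using HUt gx(2) zab unfolding z_def by simp
        define c where "c = (if z = 0 then 1 else of_real (norm z) / z)"
        have c1: "norm c = 1" unfolding c_def by (simp add: norm_divide)
        have cz: "c * z = of_real (norm z)" unfolding c_def by auto
        have recz: "re (c * z) = norm z" using cz re_of_real by simp
        have spl: "re (c * z) = re (c * a) - t * re (c * b)"
          unfolding z_def by (simp add: right_diff_distrib re_diff mult.left_commute[of c] re_scale)
        have aN: "norm a \<le> N" unfolding a_def N_def using normW_upper[OF ks gS Wsub gx(1)] by simp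
        have bd: "norm b \<le> d" unfolding b_def d_def using normW_upper[OF ks gD Wsub gx(1)] by simp
        have ca: "re (c * a) \<le> N" using re_le[of "c * a"] aN c1 by (simp add: norm_mult)
        have cb: "re (c * b) \<ge> - d" using re_ge[of "c * b"] bd c1 by (simp add: norm_mult)
        have "t * re (c * b) \<le> t * (- r * d)" using spl recz zge ca by (simp add: algebra_simps)
        then have cb2: "re (c * b) \<le> - r * d" using t mult_le_cancel_left_pos by blast
        have "t * (- d) \<le> t * re (c * b)" using cb t by (intro mult_left_mono) auto
        moreover have "r * t * d \<ge> 0" using r t d0 by simp
        ultimately have ca2: "re (c * a) \<ge> N - t * d" using spl recz zge by (simp add: algebra_simps)
        show ?thesis using c1 gx(1) cb2 ca2 unfolding a_def b_def by blast
      qed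
      define Q where "Q = sphere (0::'k) 1 \<times> W"
      define \<Phi> where "\<Phi> = (\<lambda>w::'k \<times> 'k \<times> 'k. min (- r * d - re (fst w * snd (snd w))) (re (fst w * fst (snd w)) - N))"
      define \<psi> where "\<psi> = (\<lambda>p::'k \<times> ('a \<Rightarrow> 'k) \<times> 'a. (fst p, (fst (snd p) ((\<lambda>x. T x - L x) (snd (snd p))),
                                                   fst (snd p) ((\<lambda>x. U x - L x) (snd (snd p))))))"
      have Qc: "compactin (prod_topology euclidean (B_top sm)) Q"
        unfolding Q_def compactin_Times using circ Wc by simp
      have Qne: "Q \<noteq> {}" unfolding Q_def using Wne by (auto intro: exI[of _ 1])
      have cS: "continuous_map (prod_topology euclidean (B_top sm)) euclidean
                  (\<lambda>p::'k \<times> ('a \<Rightarrow> 'k) \<times> 'a. fst (snd p) ((\<lambda>x. T x - L x) (snd (snd p))))"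
        using continuous_map_compose[OF continuous_map_snd phi_cont[OF ks gS]] by (simp add: o_def)
      have cD: "continuous_map (prod_topology euclidean (B_top sm)) euclidean
                  (\<lambda>p::'k \<times> ('a \<Rightarrow> 'k) \<times> 'a. fst (snd p) ((\<lambda>x. U x - L x) (snd (snd p))))"
        using continuous_map_compose[OF continuous_map_snd phi_cont[OF ks gD]] by (simp add: o_def)
      have cpsi: "continuous_map (prod_topology euclidean (B_top sm)) (prod_topology euclidean (prod_topology euclidean euclidean)) \<psi>"
        unfolding \<psi>_def by (intro continuous_map_pairedI continuous_map_fst cS cD)
      have c1: "continuous_on UNIV (\<lambda>x::'k \<times> 'k \<times> 'k. re (fst x * snd (snd x)))"
        by (rule continuous_on_compose2[OF re_cont]) (auto intro!: continuous_intros)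
      have c2: "continuous_on UNIV (\<lambda>x::'k \<times> 'k \<times> 'k. re (fst x * fst (snd x)))"
        by (rule continuous_on_compose2[OF re_cont]) (auto intro!: continuous_intros)
      have cPhi: "continuous_on UNIV \<Phi>" unfolding \<Phi>_def
        by (intro continuous_intros c1 c2)
      have Hc: "continuous_map (prod_topology euclidean (B_top sm)) euclideanreal (\<Phi> \<circ> \<psi>)"
        using continuous_map_compose[OF cpsi, of euclideanreal \<Phi>] cPhi by simp
      from attain[OF Qc Qne Hc] obtain p where p: "p \<in> Q" "\<forall>q\<in>Q. (\<Phi> \<circ> \<psi>) q \<le> (\<Phi> \<circ> \<psi>) p" by blast
      have Hp: "(\<Phi> \<circ> \<psi>) p \<ge> 0"
      proof (rule ccontr)
        assume neg: "\<not> ?thesis"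
        define h where "h = - (\<Phi> \<circ> \<psi>) p"
        have h: "h > 0" using neg unfolding h_def by simp
        define t where "t = min 1 (h / (d + 1))"
        have t: "0 < t" "t \<le> 1" unfolding t_def using h d0 by auto
        have "t * d \<le> (h / (d + 1)) * d" unfolding t_def using d0 by (intro mult_right_mono) auto
        also have "\<dots> < h" using h d0 by (simp add: field_simps)
        finally have td: "t * d < h" .
        obtain c g x where cgx: "norm c = 1" "(g, x) \<in> W" "re (c * g (U x - L x)) \<le> - r * d"
          "re (c * g (T x - L x)) \<ge> N - t * d" using key[OF t] by blast
        have "(c, g, x) \<in> Q" unfolding Q_def using cgx by simp
        moreover have "t * d \<ge> 0" using t d0 by simp
        moreover have "(\<Phi> \<circ> \<psi>) (c, g, x) \<ge> - t * d" using cgx \<open>t * d \<ge> 0\<close> unfolding \<Phi>_def \<psi>_def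
          by (simp add: min_def)
        ultimately show False using p(2) td unfolding h_def by fastforce
      qed
      obtain c g x where pcgx: "p = (c, g, x)" by (cases p) auto
      have c1: "norm c = 1" and gxW: "(g, x) \<in> W" using p(1) unfolding pcgx Q_def by auto
      have reD: "re (c * g (U x - L x)) \<le> - r * d" and reS: "re (c * g (T x - L x)) \<ge> N"
        using Hp unfolding pcgx \<Phi>_def \<psi>_def by auto
      define w where "w = c * g (T x - L x)"
      have "norm w \<le> N" unfolding w_def N_def using normW_upper[OF ks gS Wsub gxW] c1 by (simp add: norm_mult)
      then have nw: "norm w \<le> re w" using reS unfolding w_def by simp
      have "norm w = N" using re_le[of w] nw reS \<open>norm w \<le> N\<close> unfolding w_def by simp
      then have wN: "w = of_real N" using re_eq[OF nw] by simp
      have "((\<lambda>y. c * g y), x) \<in> WS W (\<lambda>x. T x - L x)"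
        unfolding WS_def Zset_def using gxW c1 wN unfolding w_def N_def by auto
      then show "\<exists>(f, x) \<in> WS W (\<lambda>x. T x - L x). re (f (U x - L x)) \<le> - r * normW W (\<lambda>x. U x - L x)"
        using reD unfolding d_def by (intro bexI[of _ "((\<lambda>y. c * g y), x)"]) auto
    qed
  next
    assume H: "\<forall>U\<in>\<U>. \<exists>(f, x) \<in> WS W (\<lambda>x. T x - L x). re (f (U x - L x)) \<le> - r * normW W (\<lambda>x. U x - L x)"
    show "\<forall>U\<in>\<U>. normW W (\<lambda>x. T x - U x) \<ge> normW W (\<lambda>x. T x - L x) + r * normW W (\<lambda>x. U x - L x)"
    proof
      fix U assume U: "U \<in> \<U>"
      obtain f x where fx: "(f, x) \<in> WS W (\<lambda>x. T x - L x)" "re (f (U x - L x)) \<le> - r * normW W (\<lambda>x. U x - L x)"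
        using H U by blast
      then obtain c g where cg: "f = (\<lambda>y. c * g y)" "(g, x) \<in> W" "norm c = 1" "c * g (T x - L x) = of_real N"
        unfolding WS_def Zset_def N_def by auto
      note gd = gdual[OF cg(2)]
      have "g (T x - U x) = g (T x - L x) - g (U x - L x)"
        using dual_diff[OF gd(1), of "T x - L x" "U x - L x"] by simp
      then have "re (c * g (T x - U x)) = N - re (c * g (U x - L x))"
        using cg(4) re_diff re_of_real by (simp add: right_diff_distrib)
      also have "\<dots> \<ge> N + r * normW W (\<lambda>x. U x - L x)" using fx(2) cg(1) by simp
      finally have 1: "re (c * g (T x - U x)) \<ge> N + r * normW W (\<lambda>x. U x - L x)" .
      have "re (c * g (T x - U x)) \<le> norm (g (T x - U x))" using re_le cg(3) by (metis mult_1 norm_mult)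
      also have "\<dots> \<le> normW W (\<lambda>x. T x - U x)"
        using normW_upper[OF ks good_diff[OF ks gT gU[OF U]] Wsub cg(2)] by simp
      finally show "normW W (\<lambda>x. T x - U x) \<ge> normW W (\<lambda>x. T x - L x) + r * normW W (\<lambda>x. U x - L x)"
        using 1 unfolding N_def by simp
    qed
  qed
qed

lemma cmod_le_Re: "cmod z \<le> Re z \<Longrightarrow> z = complex_of_real (cmod z)"
proof -
  assume a: "cmod z \<le> Re z"
  have "Re z \<le> cmod z" by (rule complex_Re_le_cmod)
  then have e: "cmod z = Re z" using a by simp
  then have "(Re z)\<^sup>2 = (Re z)\<^sup>2 + (Im z)\<^sup>2" using cmod_power2[of z] by simp
  then have "Im z = 0" by simp
  then show ?thesis using e by (simp add: complex_eq_iff)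
qed

theorem theorem2p3:
  fixes smC :: "complex \<Rightarrow> 'b::banach \<Rightarrow> 'b"
  shows
  "(\<forall>(W :: (('a::banach \<Rightarrow> real) \<times> 'a) set) \<U> T L r.
      thm_setting (scaleR :: real \<Rightarrow> 'a \<Rightarrow> 'a) W \<U> T L r \<longrightarrow>
      ((\<forall>U\<in>\<U>. normW W (\<lambda>x. T x - U x) \<ge> normW W (\<lambda>x. T x - L x) + r * normW W (\<lambda>x. U x - L x))
       \<longleftrightarrow>
       (\<forall>U\<in>\<U>. \<exists>(f, x) \<in> WS W (\<lambda>x. T x - L x).
          f (U x - L x) \<le> - r * normW W (\<lambda>x. U x - L x))))
   \<and>
   (\<forall>(W :: (('b \<Rightarrow> complex) \<times> 'b) set) \<U> T L r.
      thm_setting smC W \<U> T L r \<longrightarrow>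
      ((\<forall>U\<in>\<U>. normW W (\<lambda>x. T x - U x) \<ge> normW W (\<lambda>x. T x - L x) + r * normW W (\<lambda>x. U x - L x))
       \<longleftrightarrow>
       (\<forall>U\<in>\<U>. \<exists>(f, x) \<in> WS W (\<lambda>x. T x - L x).
          Re (f (U x - L x)) \<le> - r * normW W (\<lambda>x. U x - L x))))"
proof (intro conjI allI impI)
  fix W :: "(('a::banach \<Rightarrow> real) \<times> 'a) set" and \<U> T L r
  assume s: "thm_setting (scaleR :: real \<Rightarrow> 'a \<Rightarrow> 'a) W \<U> T L r"
  show "(\<forall>U\<in>\<U>. normW W (\<lambda>x. T x - U x) \<ge> normW W (\<lambda>x. T x - L x) + r * normW W (\<lambda>x. U x - L x))
       \<longleftrightarrow>
       (\<forall>U\<in>\<U>. \<exists>(f, x) \<in> WS W (\<lambda>x. T x - L x).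
          f (U x - L x) \<le> - r * normW W (\<lambda>x. U x - L x))"
    using main_generic[where re = "\<lambda>z. z", OF _ _ _ _ _ _ _ s] by (simp add: compact_sphere)
next
  fix W :: "(('b \<Rightarrow> complex) \<times> 'b) set" and \<U> T L r
  assume s: "thm_setting smC W \<U> T L r"
  show "(\<forall>U\<in>\<U>. normW W (\<lambda>x. T x - U x) \<ge> normW W (\<lambda>x. T x - L x) + r * normW W (\<lambda>x. U x - L x))
       \<longleftrightarrow>
       (\<forall>U\<in>\<U>. \<exists>(f, x) \<in> WS W (\<lambda>x. T x - L x).
          Re (f (U x - L x)) \<le> - r * normW W (\<lambda>x. U x - L x))"
    by (rule main_generic[where re = Re, OF _ _ _ _ _ _ _ s])
       (auto simp: compact_sphere complex_Re_le_cmod cmod_le_Re intro: continuous_intros)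
qed

end
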